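(* Consider the weighted set cover instance with universe $\mathcal U=\{1,\dots,N\}$, sets $\mathcal P=\{\mathcal S_1,\dots,\mathcal S_r\}$ and weight function $w$, and let $(\bar A,\bar B=\mathbb I_{r+1},\bar C=\mathbb I_r)$ and $P$ be the structured system and feedback cost matrix constructed from it as in the context. If $\bar K$ is a (feasible) solution to Problem 1 for this instance, then $\mathcal S(\bar K)$ covers $\mathcal U$.
   Context: Structured system $(\bar A,\bar B,\bar C)$: $\{0,\star\}$-matrices; numerical realization = real matrices vanishing where the structured ones are $0$. Feedback cost matrix $P\in(\mathbb R\cup\{\infty\})^{m\times p}$, $P_{ij}$ = cost of feeding output $j$ to input $i$, $\infty$ = infeasible. Feedback pattern $\bar K\in\{0,\star\}^{m\times p}$, $\bar K_{ij}=\star$ only if $P_{ij}<\infty$. No structurally fixed modes: some numerical realization has $\bigcap_K\sigma(A+BKC)=\emptyset$ over all real $K$ vanishing where $\bar K$ vanishes. Problem 1: minimize $P(\bar K)=\sum_{\bar K_{ij}=\star}P_{ij}$ over patterns with no structurally fixed modes; such patterns are its solutions. Weighted set cover: $\bigcup_i\mathcal S_i=\mathcal U$, a cover is a subcollection whose union is $\mathcal U$. Construction: states $x_1,\dots,x_{N+r+1}$, inputs $u_1,\dots,u_{r+1}$, outputs $y_1,\dots,y_r$; $\bar A_{ij}=\star$ iff $i=j$, or $i\in\{1,..,N\}$ and $j=N+r+1$, or $i\in\{N+1,..,N+r\}$ and $j\in\mathcal S_{i-N}$ ($\bar A_{ij}=\star$ meaning $x_j$ influences $x_i$); $\bar B_{ij}=\star$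 iff $i=N+j$ ($j=1,..,r+1$); $\bar C_{ij}=\star$ iff $j=N+i$ ($i=1,..,r$); $P_{r+1,j}=w(\mathcal S_j)$ and $P_{jj}=0$ for $j=1,\dots,r$, all other entries $\infty$. $\mathcal S(\bar K)=\{\mathcal S_j:\bar K_{r+1,j}=\star\}$. *)

theory Defs
  imports "Jordan_Normal_Form.Char_Poly" "HOL-Library.Extended_Real"
begin

text \<open>Structured matrices as {0,star}-patterns, 1-based indices: Pat i j = True means star.
  A real matrix (0-based entries) realizes a pattern if it vanishes where the pattern is 0.\<close>
type_synonym pattern = "nat \<Rightarrow> nat \<Rightarrow> bool"

definition realizes :: "pattern \<Rightarrow> real mat \<Rightarrow> bool" where
  "realizes Pat M \<longleftrightarrow>
     (\<forall>i<dim_row M. \<forall>j<dim_col M. \<not> Pat (Suc i) (Suc j) \<longrightarrow> M $$ (i, j) = 0)"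

definition spec :: "real mat \<Rightarrow> complex set" where
  "spec M = {z. eigenvalue (map_mat complex_of_real M) z}"

definition no_SFM :: "nat \<Rightarrow> nat \<Rightarrow> nat \<Rightarrow> pattern \<Rightarrow> pattern \<Rightarrow> pattern \<Rightarrow> pattern \<Rightarrow> bool" where
  "no_SFM n m p Abar Bbar Cbar Kbar \<longleftrightarrow>
     (\<exists>A B C. A \<in> carrier_mat n n \<and> B \<in> carrier_mat n m \<and> C \<in> carrier_mat p n \<and>
        realizes Abar A \<and> realizes Bbar B \<and> realizes Cbar C \<and>
        (\<Inter>K \<in> {K. K \<in> carrier_mat m p \<and> realizes Kbar K}. spec (A + B * K * C)) = {})"

definition feasible_pattern :: "nat \<Rightarrow> nat \<Rightarrow> (nat \<Rightarrow> nat \<Rightarrow> ereal) \<Rightarrow> pattern \<Rightarrow> bool" where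
  "feasible_pattern m p P Kbar \<longleftrightarrow>
     (\<forall>i\<in>{1..m}. \<forall>j\<in>{1..p}. Kbar i j \<longrightarrow> P i j < \<infinity>)"

definition pattern_cost :: "nat \<Rightarrow> nat \<Rightarrow> (nat \<Rightarrow> nat \<Rightarrow> ereal) \<Rightarrow> pattern \<Rightarrow> ereal" where
  "pattern_cost m p P Kbar = (\<Sum>(i, j) \<in> {(i, j). i \<in> {1..m} \<and> j \<in> {1..p} \<and> Kbar i j}. P i j)"

definition problem1_solution ::
  "nat \<Rightarrow> nat \<Rightarrow> nat \<Rightarrow> pattern \<Rightarrow> pattern \<Rightarrow> pattern \<Rightarrow> (nat \<Rightarrow> nat \<Rightarrow> ereal) \<Rightarrow> pattern \<Rightarrow> bool" where
  "problem1_solution n m p Abar Bbar Cbar P Kbar \<longleftrightarrow>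
     feasible_pattern m p P Kbar \<and> no_SFM n m p Abar Bbar Cbar Kbar \<and>
     (\<forall>K'. feasible_pattern m p P K' \<and> no_SFM n m p Abar Bbar Cbar K' \<longrightarrow>
        pattern_cost m p P Kbar \<le> pattern_cost m p P K')"

definition cover_A :: "nat \<Rightarrow> nat \<Rightarrow> (nat \<Rightarrow> nat set) \<Rightarrow> pattern" where
  "cover_A N r S i j \<longleftrightarrow> i = j \<or> (i \<in> {1..N} \<and> j = N + r + 1) \<or>
      (i \<in> {N+1..N+r} \<and> j \<in> S (i - N))"

definition cover_B :: "nat \<Rightarrow> nat \<Rightarrow> pattern" where
  "cover_B N r i j \<longleftrightarrow> j \<in> {1..r+1} \<and> i = N + j"

definition cover_C :: "nat \<Rightarrow> nat \<Rightarrow> pattern" where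
  "cover_C N r i j \<longleftrightarrow> i \<in> {1..r} \<and> j = N + i"

definition cover_P :: "nat \<Rightarrow> (nat \<Rightarrow> nat set) \<Rightarrow> (nat set \<Rightarrow> real) \<Rightarrow> nat \<Rightarrow> nat \<Rightarrow> ereal" where
  "cover_P r S w i j =
     (if i = r + 1 \<and> j \<in> {1..r} then ereal (w (S j))
      else if i = j \<and> j \<in> {1..r} then 0 else \<infinity>)"

end

theory Submission
  imports Defs
begin

lemma sum_nz_ex: "(\<Sum>i<m. f i) \<noteq> (0::real) \<Longrightarrow> \<exists>i<m. f i \<noteq> 0"
  by (metis (mono_tags, lifting) lessThan_iff sum.neutral)

lemma bkc_nz:
  fixes B K C :: "real mat"
  assumes B: "B \<in> carrier_mat n m" and K: "K \<in> carrier_mat m p" and C: "C \<in> carrier_mat p n"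
    and a: "a < n" and b: "b < n" and nz: "(B * K * C) $$ (a, b) \<noteq> 0"
  shows "\<exists>i<m. \<exists>j<p. B $$ (a, i) \<noteq> 0 \<and> K $$ (i, j) \<noteq> 0 \<and> C $$ (j, b) \<noteq> 0"
proof -
  have "(B * K * C) $$ (a, b) = (\<Sum>j<p. (\<Sum>i<m. B $$ (a, i) * K $$ (i, j)) * C $$ (j, b))"
    using B K C a b
    by (simp add: scalar_prod_def lessThan_atLeast0 sum_distrib_left sum_distrib_right mult.assoc,
        subst sum.swap, simp)
  with nz obtain j where j: "j < p" "(\<Sum>i<m. B $$ (a, i) * K $$ (i, j)) * C $$ (j, b) \<noteq> 0"
    using sum_nz_ex[of "\<lambda>j. (\<Sum>i<m. B $$ (a, i) * K $$ (i, j)) * C $$ (j, b)" p] by auto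
  then have c: "C $$ (j, b) \<noteq> 0" and s: "(\<Sum>i<m. B $$ (a, i) * K $$ (i, j)) \<noteq> 0" by auto
  from sum_nz_ex[OF s] obtain i where "i < m" "B $$ (a, i) * K $$ (i, j) \<noteq> 0" by auto
  with j c show ?thesis by auto
qed

lemma main_eig:
  fixes A B C K :: "real mat" and N r u :: nat and S :: "nat \<Rightarrow> nat set" and w :: "nat set \<Rightarrow> real"
  assumes S: "\<forall>j\<in>{1..r}. S j \<subseteq> {1..N}"
    and feas: "feasible_pattern (r + 1) r (cover_P r S w) Kbar"
    and u: "u \<in> {1..N}" and unc: "\<forall>j\<in>{1..r}. Kbar (r + 1) j \<longrightarrow> u \<notin> S j"
    and A: "A \<in> carrier_mat (N+r+1) (N+r+1)" and B: "B \<in> carrier_mat (N+r+1) (r+1)"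
    and C: "C \<in> carrier_mat r (N+r+1)" and K: "K \<in> carrier_mat (r+1) r"
    and rA: "realizes (cover_A N r S) A" and rB: "realizes (cover_B N r) B"
    and rC: "realizes (cover_C N r) C" and rK: "realizes Kbar K"
  shows "complex_of_real (A $$ (u-1, u-1)) \<in> spec (A + B * K * C)"
proof -
  define n where "n = N + r + 1"
  define M where "M = A + B * K * C"
  have Mc: "M \<in> carrier_mat n n" unfolding M_def n_def using A B C K by auto
  have bkc: "N \<le> b \<and> (a = b \<or> (N \<le> b \<and> b < N + r \<and> a = N + r \<and> Kbar (r+1) (b+1-N)))"
    if ab: "a < n" "b < n" and nz: "(B * K * C) $$ (a, b) \<noteq> 0" for a b
  proof -
    from bkc_nz[OF B K C ab[unfolded n_def] nz] obtain i j where
      ij: "i < r + 1" "j < r" "B $$ (a, i) \<noteq> 0" "K $$ (i, j) \<noteq> 0" "C $$ (j, b) \<noteq> 0" by blast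
    have "cover_B N r (Suc a) (Suc i)" using rB ij ab B unfolding realizes_def n_def by auto
    hence ai: "a = N + i" unfolding cover_B_def by auto
    have "cover_C N r (Suc j) (Suc b)" using rC ij ab C unfolding realizes_def n_def by auto
    hence bj: "b = N + j" unfolding cover_C_def by auto
    have kb: "Kbar (Suc i) (Suc j)" using rK ij K unfolding realizes_def by fastforce
    hence "cover_P r S w (Suc i) (Suc j) < \<infinity>" using feas ij unfolding feasible_pattern_def by auto
    hence "i = r \<or> i = j" unfolding cover_P_def by (auto split: if_splits)
    thus ?thesis using ai bj kb ij by auto
  qed
  have Mz: "a = b \<or> (a < N \<and> b = N+r) \<or> (N \<le> a \<and> a < N+r \<and> Suc b \<in> S (Suc a - N)) \<or>
      (N \<le> b \<and> b < N + r \<and> a = N + r \<and> Kbar (r+1) (b+1-N))"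
    if ab: "a < n" "b < n" and nz: "M $$ (a, b) \<noteq> 0" for a b
  proof (cases "A $$ (a, b) = 0")
    case True
    have "M $$ (a, b) = A $$ (a, b) + (B * K * C) $$ (a, b)"
      unfolding M_def using ab A B C K unfolding n_def by (intro index_add_mat(1)) auto
    hence "(B * K * C) $$ (a, b) \<noteq> 0" using nz True by auto
    thus ?thesis using bkc[OF ab] by blast
  next
    case False
    hence "cover_A N r S (Suc a) (Suc b)" using rA ab A unfolding realizes_def n_def by auto
    thus ?thesis unfolding cover_A_def by auto
  qed
  define x where "x = u - 1"
  have xN: "x < N" "Suc x = u" using u unfolding x_def by auto
  define W where "W = {a. N \<le> a \<and> a < N + r \<and> u \<in> S (Suc a - N)}"
  have W1: "M $$ (a, b) = 0" if "b \<in> W" "a < n" "a \<noteq> b" for a b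
  proof (rule ccontr)
    assume nz: "M $$ (a, b) \<noteq> 0"
    have bn: "b < n" using that unfolding W_def n_def by auto
    have bS: "Suc b - N \<in> {1..r}" "u \<in> S (Suc b - N)" using that unfolding W_def by auto
    show False using Mz[OF that(2) bn nz]
    proof (elim disjE)
      assume h: "N \<le> a \<and> a < N+r \<and> Suc b \<in> S (Suc a - N)"
      hence "Suc a - N \<in> {1..r}" by auto
      with S have "S (Suc a - N) \<subseteq> {1..N}" by blast
      with h have "Suc b \<le> N" by auto
      thus False using that unfolding W_def by auto
    next
      assume h: "N \<le> b \<and> b < N + r \<and> a = N + r \<and> Kbar (r+1) (b+1-N)"
      thus False using unc bS by auto
    qed (use that in \<open>auto simp: W_def\<close>)
  qed
  have W2: "M $$ (a, x) = 0" if "a < n" "a \<noteq> x" "a \<notin> W" for a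
  proof (rule ccontr)
    assume nz: "M $$ (a, x) \<noteq> 0"
    have xn: "x < n" using xN unfolding n_def by auto
    show False using Mz[OF that(1) xn nz] that xN unfolding W_def by auto
  qed
  define lam where "lam = M $$ (x, x)"
  have xx: "lam = A $$ (x, x)"
  proof -
    have xn: "x < n" using xN unfolding n_def by auto
    have "(B * K * C) $$ (x, x) = 0" using bkc[OF xn xn] xN by (meson not_le)
    have "M $$ (x, x) = A $$ (x, x) + (B * K * C) $$ (x, x)"
      unfolding M_def using xn A B C K unfolding n_def by (intro index_add_mat(1)) auto
    thus ?thesis unfolding lam_def using \<open>(B * K * C) $$ (x, x) = 0\<close> by simp
  qed
  have ev: "eigenvalue M lam"
  proof (cases "\<exists>b\<in>W. M $$ (b, b) = lam")
    case True
    then obtain b where b: "b \<in> W" "M $$ (b, b) = lam" by auto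
    have bn: "b < n" using b unfolding W_def n_def by auto
    have "M *\<^sub>v unit_vec n b = lam \<cdot>\<^sub>v unit_vec n b"
    proof (rule eq_vecI)
      fix a assume "a < dim_vec (lam \<cdot>\<^sub>v unit_vec n b)"
      hence a: "a < n" by simp
      have "(M *\<^sub>v unit_vec n b) $ a = M $$ (a, b)" using Mc a bn by simp
      also have "\<dots> = (lam \<cdot>\<^sub>v unit_vec n b) $ a"
        using W1[OF b(1) a] b(2) a bn by (cases "a = b") auto
      finally show "(M *\<^sub>v unit_vec n b) $ a = (lam \<cdot>\<^sub>v unit_vec n b) $ a" .
    qed (use Mc in auto)
    moreover have "(unit_vec n b :: real vec) \<noteq> 0\<^sub>v n"
    proof
      assume h: "(unit_vec n b :: real vec) = 0\<^sub>v n"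
      have "(unit_vec n b :: real vec) $ b = 1" using bn by simp
      with h bn show False by simp
    qed
    ultimately show ?thesis unfolding eigenvalue_def eigenvector_def using Mc
      by (intro exI[of _ "unit_vec n b"]) auto
  next
    case False
    define v where "v = vec n (\<lambda>a. if a = x then 1 else if a \<in> W then M $$ (a, x) / (lam - M $$ (a, a)) else (0::real))"
    have xn: "x < n" using xN unfolding n_def by auto
    have xW: "x \<notin> W" using xN unfolding W_def by auto
    have "M *\<^sub>v v = lam \<cdot>\<^sub>v v"
    proof (rule eq_vecI)
      fix a assume "a < dim_vec (lam \<cdot>\<^sub>v v)"
      hence a: "a < n" by (simp add: v_def)
      have trm: "M $$ (a, b) * v $ b = (if b = x then M $$ (a, x) else 0) +
          (if b = a then (if a \<in> W then M $$ (a, a) * v $ a else 0) else 0)" if b: "b \<in> {0..<n}" for b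
      proof -
        have bn: "b < n" using b by auto
        show ?thesis
        proof (cases "b = x")
          case True thus ?thesis using xW xn by (auto simp: v_def)
        next
          case bx: False
          show ?thesis
          proof (cases "b \<in> W")
            case True
            thus ?thesis using W1[OF True a] bx by (cases "a = b") auto
          next
            case False thus ?thesis using bx bn by (auto simp: v_def)
          qed
        qed
      qed
      have "(M *\<^sub>v v) $ a = (\<Sum>b\<in>{0..<n}. M $$ (a, b) * v $ b)"
        using Mc a by (simp add: scalar_prod_def v_def)
      also have "\<dots> = (\<Sum>b\<in>{0..<n}. (if b = x then M $$ (a, x) else 0) +
          (if b = a then (if a \<in> W then M $$ (a, a) * v $ a else 0) else 0))"
        using trm by (rule sum.cong[OF refl])
      also have "\<dots> = M $$ (a, x) + (if a \<in> W then M $$ (a, a) * v $ a else 0)"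
        using a xn by (simp add: sum.distrib)
      also have "\<dots> = lam * v $ a"
      proof (cases "a = x")
        case True thus ?thesis using xW a by (simp add: v_def lam_def)
      next
        case ax: False
        show ?thesis
        proof (cases "a \<in> W")
          case True
          have "M $$ (a, a) \<noteq> lam" using False True by auto
          thus ?thesis using True ax a by (simp add: v_def field_simps)
        next
          case aW: False
          thus ?thesis using W2[OF a ax aW] ax a by (simp add: v_def)
        qed
      qed
      also have "\<dots> = (lam \<cdot>\<^sub>v v) $ a" using a by (simp add: v_def)
      finally show "(M *\<^sub>v v) $ a = (lam \<cdot>\<^sub>v v) $ a" .
    qed (use Mc in \<open>auto simp: v_def\<close>)
    moreover have "v \<noteq> 0\<^sub>v n"
    proof
      assume h: "v = 0\<^sub>v n"
      have "v $ x = 1" using xn by (simp add: v_def)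
      with h xn show False by simp
    qed
    ultimately show ?thesis unfolding eigenvalue_def eigenvector_def using Mc
      by (intro exI[of _ v]) (auto simp: v_def)
  qed
  have "eigenvalue (map_mat complex_of_real M) (complex_of_real lam)"
    by (rule of_real_hom.eigenvalue_hom[OF Mc ev])
  thus ?thesis unfolding spec_def M_def xx x_def by simp
qed

theorem lemma1:
  fixes N r :: nat and S :: "nat \<Rightarrow> nat set" and w :: "nat set \<Rightarrow> real" and Kbar :: pattern
  assumes "\<forall>j\<in>{1..r}. S j \<subseteq> {1..N}"
    and "(\<Union>j\<in>{1..r}. S j) = {1..N}"
    and "problem1_solution (N + r + 1) (r + 1) r (cover_A N r S) (cover_B N r) (cover_C N r)
           (cover_P r S w) Kbar"
  shows "(\<Union>j\<in>{j\<in>{1..r}. Kbar (r + 1) j}. S j) = {1..N}"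
proof (rule ccontr)
  assume ne: "(\<Union>j\<in>{j\<in>{1..r}. Kbar (r + 1) j}. S j) \<noteq> {1..N}"
  have "(\<Union>j\<in>{j\<in>{1..r}. Kbar (r + 1) j}. S j) \<subseteq> {1..N}" using assms(1) by auto
  with ne obtain u where u: "u \<in> {1..N}" and unc: "\<forall>j\<in>{1..r}. Kbar (r + 1) j \<longrightarrow> u \<notin> S j" by blast
  from assms(3) have feas: "feasible_pattern (r + 1) r (cover_P r S w) Kbar"
    and nsfm: "no_SFM (N + r + 1) (r + 1) r (cover_A N r S) (cover_B N r) (cover_C N r) Kbar"
    unfolding problem1_solution_def by auto
  from nsfm obtain A B C where A: "A \<in> carrier_mat (N+r+1) (N+r+1)" and B: "B \<in> carrier_mat (N+r+1) (r+1)"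
    and C: "C \<in> carrier_mat r (N+r+1)" and rA: "realizes (cover_A N r S) A" and rB: "realizes (cover_B N r) B"
    and rC: "realizes (cover_C N r) C"
    and emp: "(\<Inter>K \<in> {K. K \<in> carrier_mat (r+1) r \<and> realizes Kbar K}. spec (A + B * K * C)) = {}"
    unfolding no_SFM_def by blast
  have "complex_of_real (A $$ (u-1, u-1)) \<in> (\<Inter>K \<in> {K. K \<in> carrier_mat (r+1) r \<and> realizes Kbar K}. spec (A + B * K * C))"
    using main_eig[OF assms(1) feas u unc A B C _ rA rB rC] by blast
  with emp show False by blast
qed

end
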